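(* Let $P=P_0\cup P_m$ be a finite poset with $P_0\cap P_m=\emptyset$, where $P_m=\{x_1,\dots,x_m\}$, and put $P_i=\{x_1,\dots,x_i\}$ for $i=1,\dots,m$ (and regard $P_0\cup P_i$ as induced subposets of $P$). Then $$\mathcal{F}(P)\cong(\cdots((\mathcal{F}(P_0)\boxplus\mathcal{F}((P_0\cup P_1)*x_1))\boxplus\mathcal{F}((P_0\cup P_2)*x_2))\boxplus\cdots\boxplus\mathcal{F}((P_0\cup P_{m-1})*x_{m-1}))\boxplus\mathcal{F}((P_0\cup P_m)*x_m),$$ that is, there are lattices $L_0=\mathcal{F}(P_0),L_1,\dots,L_m$ with $L_m\cong\mathcal{F}(P)$ such that for each $i$, $L_i=L_{i-1}\boxplus K_i$ for some cutting $K_i$ of $L_{i-1}$ with $K_i\cong\mathcal{F}((P_0\cup P_i)*x_i)$.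
   Context: For a finite poset $P$, $\mathcal{F}(P)$ is the set of filters (up-sets) of $P$ ordered by reverse inclusion; it is a finite distributive lattice with least element $P$ and greatest element $\emptyset$, and $\mathcal{F}(\emptyset)$ is the one-element lattice. A cutting of a finite distributive lattice $L$ is an interval $K=[\hat0_K,\hat1_K]$ of $L$ such that every maximal chain of $L$ meets $K$. Every finite distributive lattice is isomorphic to some $\mathcal{F}(Q)$. For a cutting $K$ of $L=\mathcal{F}(Q)$, let $S=\hat0_K\setminus\hat1_K$, $S_0$ the set of maximal elements of $Q\setminus\hat0_K$, $S_1$ the set of minimal elements of $\hat1_K$. The poset $Q_K$ is $Q\cup\{x_K\}$ ($x_K$ new) where the order on $Q$ is unchanged, $z<x_K$ iff $z\le s$ for some $s\in S_0$, $x_K<y$ iff $y\ge s$ for some $s\in S_1$, and $x_K$ is incomparable to every element of $S$. The convex expansion is $L\boxplus K:=\mathcal{F}(Q_K)$. For a poset $Q$ and element $x$, $Q*x$ is the induced subposet of elements of $Q$ incomparable to $x$. *)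

theory Defs
  imports Main
begin

text \<open>A finite poset is a carrier set with an order relation (only its values on the carrier matter).\<close>
definition poset_on :: "'a set \<Rightarrow> ('a \<Rightarrow> 'a \<Rightarrow> bool) \<Rightarrow> bool" where
  "poset_on A le \<longleftrightarrow> (\<forall>x\<in>A. le x x) \<and>
     (\<forall>x\<in>A. \<forall>y\<in>A. le x y \<and> le y x \<longrightarrow> x = y) \<and>
     (\<forall>x\<in>A. \<forall>y\<in>A. \<forall>z\<in>A. le x y \<and> le y z \<longrightarrow> le x z)"

text \<open>Filters (up-sets) of a poset; the lattice F(P) is this set ordered by reverse inclusion.\<close>
definition filters :: "'a set \<Rightarrow> ('a \<Rightarrow> 'a \<Rightarrow> bool) \<Rightarrow> 'a set set" where
  "filters A le = {F. F \<subseteq> A \<and> (\<forall>x\<in>F. \<forall>y\<in>A. le x y \<longrightarrow> y \<in> F)}"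

definition filt_le :: "'a set \<Rightarrow> 'a set \<Rightarrow> bool" where
  "filt_le F G \<longleftrightarrow> G \<subseteq> F"

definition order_iso :: "'a set \<Rightarrow> ('a \<Rightarrow> 'a \<Rightarrow> bool) \<Rightarrow> 'b set \<Rightarrow> ('b \<Rightarrow> 'b \<Rightarrow> bool) \<Rightarrow> bool" where
  "order_iso X r Y s \<longleftrightarrow> (\<exists>f. bij_betw f X Y \<and> (\<forall>x\<in>X. \<forall>y\<in>X. r x y \<longleftrightarrow> s (f x) (f y)))"

definition chain_in :: "'a set \<Rightarrow> ('a \<Rightarrow> 'a \<Rightarrow> bool) \<Rightarrow> 'a set \<Rightarrow> bool" where
  "chain_in X r C \<longleftrightarrow> C \<subseteq> X \<and> (\<forall>x\<in>C. \<forall>y\<in>C. r x y \<or> r y x)"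

definition maximal_chain :: "'a set \<Rightarrow> ('a \<Rightarrow> 'a \<Rightarrow> bool) \<Rightarrow> 'a set \<Rightarrow> bool" where
  "maximal_chain X r C \<longleftrightarrow> chain_in X r C \<and> (\<forall>D. chain_in X r D \<and> C \<subseteq> D \<longrightarrow> D = C)"

definition interval :: "'a set \<Rightarrow> ('a \<Rightarrow> 'a \<Rightarrow> bool) \<Rightarrow> 'a \<Rightarrow> 'a \<Rightarrow> 'a set" where
  "interval X r a b = {z\<in>X. r a z \<and> r z b}"

definition cutting :: "'a set \<Rightarrow> ('a \<Rightarrow> 'a \<Rightarrow> bool) \<Rightarrow> 'a \<Rightarrow> 'a \<Rightarrow> bool" where
  "cutting X r a b \<longleftrightarrow> a \<in> X \<and> b \<in> X \<and> r a b \<and>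
     (\<forall>C. maximal_chain X r C \<longrightarrow> C \<inter> interval X r a b \<noteq> {})"

text \<open>The order of Q_K, for the cutting K = [a, b] of F(Q) and new element x.\<close>
definition conv_exp_rel :: "'a set \<Rightarrow> ('a \<Rightarrow> 'a \<Rightarrow> bool) \<Rightarrow> 'a set \<Rightarrow> 'a set \<Rightarrow> 'a \<Rightarrow> 'a \<Rightarrow> 'a \<Rightarrow> bool" where
  "conv_exp_rel Q le a b x u v \<longleftrightarrow>
     (let S0 = {s\<in>Q - a. \<forall>t\<in>Q - a. le s t \<longrightarrow> t = s};
          S1 = {s\<in>b. \<forall>t\<in>b. le t s \<longrightarrow> t = s};
          S = a - b in
     (u \<in> Q \<and> v \<in> Q \<and> le u v) \<or> (u = x \<and> v = x) \<or>
     (u \<in> Q \<and> v = x \<and> u \<notin> S \<and> (\<exists>s\<in>S0. le u s)) \<or>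
     (u = x \<and> v \<in> Q \<and> v \<notin> S \<and> (\<exists>s\<in>S1. le s v)))"

text \<open>Q * x: elements of Q incomparable to x.\<close>
definition incomp_sub :: "'a set \<Rightarrow> ('a \<Rightarrow> 'a \<Rightarrow> bool) \<Rightarrow> 'a \<Rightarrow> 'a set" where
  "incomp_sub A le x = {y\<in>A. \<not> le y x \<and> \<not> le x y}"

end

theory Submission
  imports Defs
begin


lemma poset_transfer:
  assumes "poset_on P le" "inj_on h A" "h ` A \<subseteq> P"
  shows "poset_on A (\<lambda>u v. le (h u) (h v))"
  using assms unfolding poset_on_def inj_on_def by (metis image_subset_iff)

lemma poset_sub: "poset_on A r \<Longrightarrow> B \<subseteq> A \<Longrightarrow> poset_on B r"
  unfolding poset_on_def by blast

lemma finite_max: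
  assumes fin: "finite A" and po: "poset_on A r" and u: "u \<in> A"
  shows "\<exists>s\<in>A. r u s \<and> (\<forall>t\<in>A. r s t \<longrightarrow> t = s)"
proof -
  define U where "U = {s\<in>A. r u s}"
  define f where "f s = card {t\<in>A. r t s}" for s
  have Ufin: "finite U" using fin unfolding U_def by auto
  have uU: "u \<in> U" using u po unfolding U_def poset_on_def by auto
  have "Max (f ` U) \<in> f ` U" using Ufin uU by (intro Max_in) auto
  then obtain s where sU: "s \<in> U" and fs: "f s = Max (f ` U)" by auto
  show ?thesis
  proof (intro bexI conjI ballI impI)
    show "s \<in> A" "r u s" using sU unfolding U_def by auto
  next
    fix t assume tA: "t \<in> A" and st: "r s t"
    show "t = s"
    proof (rule ccontr)
      assume ne: "t \<noteq> s"
      have sA: "s \<in> A" and us: "r u s" using sU unfolding U_def by auto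
      have tU: "t \<in> U" using po tA sA u us st unfolding U_def poset_on_def by blast
      have "{t'\<in>A. r t' s} \<subset> {t'\<in>A. r t' t}"
      proof
        show "{t'\<in>A. r t' s} \<subseteq> {t'\<in>A. r t' t}" using po tA sA st unfolding poset_on_def by blast
        have "r t t" using po tA unfolding poset_on_def by blast
        moreover have "\<not> r t s" using po tA sA st ne unfolding poset_on_def by blast
        ultimately show "{t'\<in>A. r t' s} \<noteq> {t'\<in>A. r t' t}" using tA by blast
      qed
      hence "f s < f t" unfolding f_def using fin by (intro psubset_card_mono) auto
      moreover have "f t \<le> Max (f ` U)" using Ufin tU by auto
      ultimately show False using fs by simp
    qed
  qed
qed

lemma finite_min:
  assumes fin: "finite A" and po: "poset_on A r" and u: "u \<in> A"
  shows "\<exists>s\<in>A. r s u \<and> (\<forall>t\<in>A. r t s \<longrightarrow> t = s)"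
proof -
  have "poset_on A (\<lambda>x y. r y x)" using po unfolding poset_on_def by blast
  from finite_max[OF fin this u] show ?thesis .
qed

lemma order_iso_trans:
  assumes "order_iso X r Y s" "order_iso Y s Z t"
  shows "order_iso X r Z t"
proof -
  from assms obtain f g where f: "bij_betw f X Y" "\<forall>x\<in>X. \<forall>y\<in>X. r x y \<longleftrightarrow> s (f x) (f y)"
    and g: "bij_betw g Y Z" "\<forall>x\<in>Y. \<forall>y\<in>Y. s x y \<longleftrightarrow> t (g x) (g y)"
    unfolding order_iso_def by blast
  have "bij_betw (g \<circ> f) X Z" using f g bij_betw_trans by blast
  moreover have "\<forall>x\<in>X. \<forall>y\<in>X. r x y \<longleftrightarrow> t ((g \<circ> f) x) ((g \<circ> f) y)"
    using f g by (auto simp: bij_betw_def)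
  ultimately show ?thesis unfolding order_iso_def by blast
qed

lemma inj_img_sub: "inj_on h A \<Longrightarrow> F \<subseteq> A \<Longrightarrow> G \<subseteq> A \<Longrightarrow> h ` G \<subseteq> h ` F \<longleftrightarrow> G \<subseteq> F"
  unfolding inj_on_def by blast

lemma filters_iso:
  assumes bij: "bij_betw h A B" and rel: "\<forall>u\<in>A. \<forall>v\<in>A. r u v \<longleftrightarrow> s (h u) (h v)"
  shows "order_iso (filters A r) filt_le (filters B s) filt_le"
proof -
  have inj: "inj_on h A" and img: "h ` A = B" using bij by (auto simp: bij_betw_def)
  have "bij_betw (image h) (filters A r) (filters B s)"
  proof (rule bij_betw_imageI)
    show "inj_on (image h) (filters A r)"
      unfolding inj_on_def filters_def using inj_on_image_eq_iff[OF inj] by blast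
    show "image h ` filters A r = filters B s"
    proof
      show "image h ` filters A r \<subseteq> filters B s"
      proof
        fix G assume "G \<in> image h ` filters A r"
        then obtain F where F: "F \<in> filters A r" "G = h ` F" by auto
        show "G \<in> filters B s" unfolding filters_def
        proof (intro CollectI conjI ballI impI)
          show "G \<subseteq> B" using F img unfolding filters_def by auto
          fix x y assume "x \<in> G" "y \<in> B" "s x y"
          then obtain u v where "u \<in> F" "x = h u" "v \<in> A" "y = h v" using F img by auto
          then show "y \<in> G" using F rel \<open>s x y\<close> unfolding filters_def by blast
        qed
      qed
    next
      show "filters B s \<subseteq> image h ` filters A r"
      proof
        fix G assume G: "G \<in> filters B s"
        define F where "F = {u\<in>A. h u \<in> G}"
        have "h ` F = G" using G img unfolding F_def filters_def by auto
        moreover have "F \<in> filters A r" using G rel img unfolding F_def filters_def by blast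
        ultimately show "G \<in> image h ` filters A r" by blast
      qed
    qed
  qed
  moreover have "\<forall>F\<in>filters A r. \<forall>G\<in>filters A r. filt_le F G \<longleftrightarrow> filt_le (h ` F) (h ` G)"
    unfolding filt_le_def filters_def using inj_img_sub[OF inj] by blast
  ultimately show ?thesis unfolding order_iso_def by blast
qed

lemma interval_iso:
  assumes a: "a \<in> filters Q r" and b: "b \<in> filters Q r" and ba: "b \<subseteq> a"
  shows "order_iso (interval (filters Q r) filt_le a b) filt_le (filters (a - b) r) filt_le"
proof -
  define I where "I = {F \<in> filters Q r. b \<subseteq> F \<and> F \<subseteq> a}"
  have I: "interval (filters Q r) filt_le a b = I"
    unfolding interval_def filt_le_def I_def by auto
  have aQ: "a \<subseteq> Q" and aU: "\<And>x y. x \<in> a \<Longrightarrow> y \<in> Q \<Longrightarrow> r x y \<Longrightarrow> y \<in> a"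
    using a unfolding filters_def by auto
  have bQ: "b \<subseteq> Q" and bU: "\<And>x y. x \<in> b \<Longrightarrow> y \<in> Q \<Longrightarrow> r x y \<Longrightarrow> y \<in> b"
    using b unfolding filters_def by auto
  have "bij_betw (\<lambda>F. F - b) I (filters (a - b) r)"
  proof (rule bij_betw_imageI)
    show "inj_on (\<lambda>F. F - b) I"
    proof (rule inj_onI)
      fix F G assume "F \<in> I" "G \<in> I" "F - b = G - b"
      then have "b \<subseteq> F" "b \<subseteq> G" "F - b = G - b" unfolding I_def by auto
      then show "F = G" by blast
    qed
    show "(\<lambda>F. F - b) ` I = filters (a - b) r"
    proof
      show "(\<lambda>F. F - b) ` I \<subseteq> filters (a - b) r"
      proof
        fix G assume "G \<in> (\<lambda>F. F - b) ` I"
        then obtain F where F: "F \<in> I" "G = F - b" by blast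
        have FQ: "F \<subseteq> Q" and FU: "\<And>x y. x \<in> F \<Longrightarrow> y \<in> Q \<Longrightarrow> r x y \<Longrightarrow> y \<in> F"
          and Fa: "F \<subseteq> a" using F(1) unfolding I_def filters_def by auto
        have "G \<subseteq> a - b" using F(2) Fa by blast
        moreover have "\<forall>x\<in>G. \<forall>y\<in>a - b. r x y \<longrightarrow> y \<in> G"
        proof (intro ballI impI)
          fix x y assume "x \<in> G" "y \<in> a - b" "r x y"
          then show "y \<in> G" using FU[of x y] aQ F(2) by blast
        qed
        ultimately show "G \<in> filters (a - b) r" unfolding filters_def by blast
      qed
    next
      show "filters (a - b) r \<subseteq> (\<lambda>F. F - b) ` I"
      proof
        fix G assume G: "G \<in> filters (a - b) r"
        have Gab: "G \<subseteq> a - b" and GU: "\<And>x y. x \<in> G \<Longrightarrow> y \<in> a - b \<Longrightarrow> r x y \<Longrightarrow> y \<in> G"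
          using G unfolding filters_def by auto
        have "\<forall>x\<in>G \<union> b. \<forall>y\<in>Q. r x y \<longrightarrow> y \<in> G \<union> b"
        proof (intro ballI impI)
          fix x y assume x: "x \<in> G \<union> b" and y: "y \<in> Q" and xy: "r x y"
          show "y \<in> G \<union> b"
          proof (cases "x \<in> b")
            case True then show ?thesis using bU[OF _ y xy] by blast
          next
            case False
            then have "x \<in> G" using x by blast
            then have "x \<in> a" using Gab by blast
            then have "y \<in> a" using aU y xy by blast
            then show ?thesis using GU[OF \<open>x \<in> G\<close> _ xy] by blast
          qed
        qed
        moreover have "G \<union> b \<subseteq> Q" using Gab aQ bQ by blast
        ultimately have "G \<union> b \<in> filters Q r" unfolding filters_def by blast
        moreover have eqG: "G \<union> b - b = G" using Gab by blast
        moreover have "b \<subseteq> G \<union> b" "G \<union> b \<subseteq> a" using Gab ba by auto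
        ultimately have "G \<union> b \<in> I" unfolding I_def by blast
        then have "G \<union> b - b \<in> (\<lambda>F. F - b) ` I" by (rule imageI)
        then show "G \<in> (\<lambda>F. F - b) ` I" using eqG by simp
      qed
    qed
  qed
  moreover have "\<forall>F\<in>I. \<forall>G\<in>I. filt_le F G \<longleftrightarrow> filt_le (F - b) (G - b)"
  proof (intro ballI)
    fix F G assume "F \<in> I" "G \<in> I"
    then have "b \<subseteq> F" "b \<subseteq> G" unfolding I_def by auto
    then show "filt_le F G \<longleftrightarrow> filt_le (F - b) (G - b)" unfolding filt_le_def by blast
  qed
  ultimately show ?thesis unfolding order_iso_def I by blast
qed

lemma cutting_lemma:
  assumes a: "a \<in> filters Q r" and b: "b \<in> filters Q r" and ba: "b \<subseteq> a"
    and key: "\<forall>z\<in>Q - a. \<forall>y\<in>b. r z y"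
  shows "cutting (filters Q r) filt_le a b"
  unfolding cutting_def
proof (intro conjI allI impI)
  show "a \<in> filters Q r" "b \<in> filters Q r" "filt_le a b" using a b ba by (auto simp: filt_le_def)
  fix C assume mc: "maximal_chain (filters Q r) filt_le C"
  have CX: "C \<subseteq> filters Q r" and ch: "\<forall>x\<in>C. \<forall>y\<in>C. y \<subseteq> x \<or> x \<subseteq> y"
    and mx: "\<And>D. chain_in (filters Q r) filt_le D \<Longrightarrow> C \<subseteq> D \<Longrightarrow> D = C"
    using mc unfolding maximal_chain_def chain_in_def filt_le_def by auto
  have bQ: "b \<subseteq> Q" using b unfolding filters_def by auto
  define F where "F = Q \<inter> \<Inter>{K\<in>C. b \<subseteq> K}"
  have FX: "F \<in> filters Q r" using CX unfolding F_def filters_def by blast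
  have "\<forall>K\<in>C. K \<subseteq> F \<or> F \<subseteq> K"
  proof
    fix K assume K: "K \<in> C"
    show "K \<subseteq> F \<or> F \<subseteq> K"
    proof (cases "b \<subseteq> K")
      case True then show ?thesis using K unfolding F_def by blast
    next
      case False
      have "\<forall>K'\<in>C. b \<subseteq> K' \<longrightarrow> K \<subseteq> K'" using ch K False by blast
      moreover have "K \<subseteq> Q" using K CX unfolding filters_def by blast
      ultimately show ?thesis unfolding F_def by blast
    qed
  qed
  hence "chain_in (filters Q r) filt_le (insert F C)"
    using FX CX ch unfolding chain_in_def filt_le_def by blast
  hence FC: "F \<in> C" using mx by blast
  have bF: "b \<subseteq> F" using bQ unfolding F_def by blast
  define G where "G = \<Union>{K\<in>C. K \<subset> F}"
  have GbX: "G \<union> b \<in> filters Q r" using CX b unfolding G_def filters_def by blast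
  have GF: "G \<subseteq> F" unfolding G_def by blast
  have "\<forall>K\<in>C. K \<subseteq> G \<union> b \<or> G \<union> b \<subseteq> K"
  proof
    fix K assume K: "K \<in> C"
    show "K \<subseteq> G \<union> b \<or> G \<union> b \<subseteq> K"
    proof (cases "K \<subset> F")
      case True then show ?thesis using K unfolding G_def by blast
    next
      case False
      then have "F \<subseteq> K" using ch K FC by blast
      then show ?thesis using GF bF by blast
    qed
  qed
  hence "chain_in (filters Q r) filt_le (insert (G \<union> b) C)"
    using GbX CX ch unfolding chain_in_def filt_le_def by blast
  hence GbC: "G \<union> b \<in> C" using mx by blast
  have FGb: "F \<subseteq> G \<union> b" using GbC GbX unfolding F_def filters_def by blast
  have Fa: "F \<subseteq> a"
  proof
    fix z assume zF: "z \<in> F"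
    show "z \<in> a"
    proof (rule ccontr)
      assume za: "z \<notin> a"
      then have "z \<notin> b" using ba by blast
      then have "z \<in> G" using zF FGb by blast
      then obtain K where K: "K \<in> C" "K \<subset> F" "z \<in> K" unfolding G_def by blast
      have zQ: "z \<in> Q" using zF unfolding F_def by blast
      have "b \<subseteq> K" using K CX key zQ za bQ unfolding filters_def by blast
      then have "F \<subseteq> K" using K unfolding F_def by blast
      then show False using K by blast
    qed
  qed
  have "F \<in> interval (filters Q r) filt_le a b"
    unfolding interval_def filt_le_def using FX Fa bF by blast
  then show "C \<inter> interval (filters Q r) filt_le a b \<noteq> {}" using FC by blast
qed

lemma conv_exp_correct:
  assumes fin: "finite Q" and po: "poset_on P le" and hQ: "h ` Q \<subseteq> P" and inj: "inj_on h Q"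
    and xP: "x \<in> P" and yn: "y \<notin> Q" and hy: "h y = x"
    and rel: "\<forall>u\<in>Q. \<forall>v\<in>Q. r u v \<longleftrightarrow> le (h u) (h v)"
    and a_def: "a = {z\<in>Q. \<not> le (h z) x}" and b_def: "b = {z\<in>Q. le x (h z)}"
  shows "\<forall>u\<in>insert y Q. \<forall>v\<in>insert y Q. conv_exp_rel Q r a b y u v \<longleftrightarrow> le (h u) (h v)"
proof -
  have poQ: "poset_on Q (\<lambda>u v. le (h u) (h v))" using poset_transfer[OF po inj hQ] .
  have trans: "\<And>p q s. p \<in> P \<Longrightarrow> q \<in> P \<Longrightarrow> s \<in> P \<Longrightarrow> le p q \<Longrightarrow> le q s \<Longrightarrow> le p s"
    using po unfolding poset_on_def by blast
  have hQ': "\<And>z. z \<in> Q \<Longrightarrow> h z \<in> P" using hQ by blast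
  have c1: "conv_exp_rel Q r a b y u v \<longleftrightarrow> le (h u) (h v)" if "u \<in> Q" "v \<in> Q" for u v
    using that yn rel unfolding conv_exp_rel_def Let_def by auto
  have c2: "conv_exp_rel Q r a b y y y \<longleftrightarrow> le (h y) (h y)"
    using xP po hy unfolding conv_exp_rel_def Let_def poset_on_def by auto
  have c3: "conv_exp_rel Q r a b y u y \<longleftrightarrow> le (h u) (h y)" if u: "u \<in> Q" for u
  proof -
    have "conv_exp_rel Q r a b y u y \<longleftrightarrow> (u \<notin> a - b \<and> (\<exists>s\<in>{s\<in>Q - a. \<forall>t\<in>Q - a. r s t \<longrightarrow> t = s}. r u s))"
      using yn u unfolding conv_exp_rel_def Let_def by auto
    also have "\<dots> \<longleftrightarrow> le (h u) x"
    proof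
      assume "u \<notin> a - b \<and> (\<exists>s\<in>{s\<in>Q - a. \<forall>t\<in>Q - a. r s t \<longrightarrow> t = s}. r u s)"
      then obtain s where s: "s \<in> Q" "s \<notin> a" "r u s" by blast
      have "le (h s) x" using s a_def by blast
      moreover have "le (h u) (h s)" using s rel u by blast
      ultimately show "le (h u) x" using trans hQ' u s xP by blast
    next
      assume ux: "le (h u) x"
      define D where "D = {z\<in>Q. le (h z) x}"
      have QD: "Q - a = D" unfolding D_def a_def by blast
      have poD: "poset_on D (\<lambda>u v. le (h u) (h v))" by (rule poset_sub[OF poQ]) (auto simp: D_def)
      have fD: "finite D" using fin unfolding D_def by auto
      have uD: "u \<in> D" using u ux unfolding D_def by blast
      obtain s where s: "s \<in> D" "le (h u) (h s)" "\<forall>t\<in>D. le (h s) (h t) \<longrightarrow> t = s"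
        using finite_max[OF fD poD uD] by auto
      have "u \<notin> a" using ux a_def by blast
      moreover have "s \<in> {s\<in>Q - a. \<forall>t\<in>Q - a. r s t \<longrightarrow> t = s}"
        using s rel QD unfolding D_def by auto
      moreover have "r u s" using s rel u unfolding D_def by auto
      ultimately show "u \<notin> a - b \<and> (\<exists>s\<in>{s\<in>Q - a. \<forall>t\<in>Q - a. r s t \<longrightarrow> t = s}. r u s)" by blast
    qed
    finally show ?thesis using hy by simp
  qed
  have c4: "conv_exp_rel Q r a b y y v \<longleftrightarrow> le (h y) (h v)" if v: "v \<in> Q" for v
  proof -
    have "conv_exp_rel Q r a b y y v \<longleftrightarrow> (v \<notin> a - b \<and> (\<exists>s\<in>{s\<in>b. \<forall>t\<in>b. r t s \<longrightarrow> t = s}. r s v))"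
      using yn v unfolding conv_exp_rel_def Let_def by auto
    also have "\<dots> \<longleftrightarrow> le x (h v)"
    proof
      assume "v \<notin> a - b \<and> (\<exists>s\<in>{s\<in>b. \<forall>t\<in>b. r t s \<longrightarrow> t = s}. r s v)"
      then obtain s where s: "s \<in> b" "r s v" by blast
      have "le x (h s)" "s \<in> Q" using s b_def by auto
      moreover have "le (h s) (h v)" using s rel v b_def by blast
      ultimately show "le x (h v)" using trans hQ' v xP by blast
    next
      assume vx: "le x (h v)"
      have pob: "poset_on b (\<lambda>u v. le (h u) (h v))" by (rule poset_sub[OF poQ]) (auto simp: b_def)
      have fb: "finite b" using fin unfolding b_def by auto
      have vb: "v \<in> b" using v vx unfolding b_def by blast
      obtain s where s: "s \<in> b" "le (h s) (h v)" "\<forall>t\<in>b. le (h t) (h s) \<longrightarrow> t = s"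
        using finite_min[OF fb pob vb] by auto
      have "s \<in> {s\<in>b. \<forall>t\<in>b. r t s \<longrightarrow> t = s}"
        using s rel unfolding b_def by auto
      moreover have "r s v" using s rel v unfolding b_def by auto
      ultimately show "v \<notin> a - b \<and> (\<exists>s\<in>{s\<in>b. \<forall>t\<in>b. r t s \<longrightarrow> t = s}. r s v)" using vb by blast
    qed
    finally show ?thesis using hy by simp
  qed
  show ?thesis using c1 c2 c3 c4 by blast
qed

lemma step_lemma:
  assumes fin: "finite Q" and po: "poset_on P le" and hQ: "h ` Q \<subseteq> P" and inj: "inj_on h Q"
    and xP: "x \<in> P" and xn: "x \<notin> h ` Q"
    and rel: "\<forall>u\<in>Q. \<forall>v\<in>Q. r u v \<longleftrightarrow> le (h u) (h v)"
    and a_def: "a = {z\<in>Q. \<not> le (h z) x}" and b_def: "b = {z\<in>Q. le x (h z)}"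
  shows "cutting (filters Q r) filt_le a b \<and>
    order_iso (interval (filters Q r) filt_le a b) filt_le
      (filters (incomp_sub (insert x (h ` Q)) le x) le) filt_le"
proof -
  have trans: "\<And>p q s. p \<in> P \<Longrightarrow> q \<in> P \<Longrightarrow> s \<in> P \<Longrightarrow> le p q \<Longrightarrow> le q s \<Longrightarrow> le p s"
    using po unfolding poset_on_def by blast
  have hQ': "\<And>z. z \<in> Q \<Longrightarrow> h z \<in> P" using hQ by blast
  have xx: "le x x" using po xP unfolding poset_on_def by blast
  have aF: "a \<in> filters Q r"
  proof -
    have "\<forall>z\<in>a. \<forall>y\<in>Q. r z y \<longrightarrow> y \<in> a"
    proof (intro ballI impI)
      fix z y assume z: "z \<in> a" and y: "y \<in> Q" and zy: "r z y"
      have zQ: "z \<in> Q" and nz: "\<not> le (h z) x" using z a_def by auto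
      have "le (h z) (h y)" using rel zQ y zy by blast
      then have "\<not> le (h y) x" using nz trans[OF hQ'[OF zQ] hQ'[OF y] xP] by blast
      then show "y \<in> a" using y a_def by blast
    qed
    then show ?thesis unfolding filters_def a_def by blast
  qed
  have bF: "b \<in> filters Q r"
  proof -
    have "\<forall>z\<in>b. \<forall>y\<in>Q. r z y \<longrightarrow> y \<in> b"
    proof (intro ballI impI)
      fix z y assume z: "z \<in> b" and y: "y \<in> Q" and zy: "r z y"
      have zQ: "z \<in> Q" and nz: "le x (h z)" using z b_def by auto
      have "le (h z) (h y)" using rel zQ y zy by blast
      then have "le x (h y)" using nz trans[OF xP hQ'[OF zQ] hQ'[OF y]] by blast
      then show "y \<in> b" using y b_def by blast
    qed
    then show ?thesis unfolding filters_def b_def by blast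
  qed
  have ba: "b \<subseteq> a"
  proof
    fix z assume z: "z \<in> b"
    then have zQ: "z \<in> Q" and xz: "le x (h z)" using b_def by auto
    have "\<not> le (h z) x"
    proof
      assume "le (h z) x"
      then have "h z = x" using po xz hQ'[OF zQ] xP unfolding poset_on_def by blast
      then show False using xn zQ by blast
    qed
    then show "z \<in> a" using a_def zQ by blast
  qed
  have key: "\<forall>z\<in>Q - a. \<forall>y\<in>b. r z y"
  proof (intro ballI)
    fix z y assume z: "z \<in> Q - a" and y: "y \<in> b"
    have zQ: "z \<in> Q" "le (h z) x" using z a_def by auto
    have yQ: "y \<in> Q" "le x (h y)" using y b_def by auto
    have "le (h z) (h y)" using trans[OF hQ'[OF zQ(1)] xP hQ'[OF yQ(1)]] zQ yQ by blast
    then show "r z y" using rel zQ yQ by blast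
  qed
  have cut: "cutting (filters Q r) filt_le a b" using cutting_lemma[OF aF bF ba key] .
  have iso1: "order_iso (interval (filters Q r) filt_le a b) filt_le (filters (a - b) r) filt_le"
    using interval_iso[OF aF bF ba] .
  have abQ: "a - b \<subseteq> Q" using a_def by blast
  have img: "h ` (a - b) = incomp_sub (insert x (h ` Q)) le x"
  proof
    show "h ` (a - b) \<subseteq> incomp_sub (insert x (h ` Q)) le x"
      unfolding incomp_sub_def a_def b_def by auto
    show "incomp_sub (insert x (h ` Q)) le x \<subseteq> h ` (a - b)"
    proof
      fix w assume "w \<in> incomp_sub (insert x (h ` Q)) le x"
      then have w: "w \<in> insert x (h ` Q)" "\<not> le w x" "\<not> le x w" unfolding incomp_sub_def by auto
      then have "w \<in> h ` Q" using xx by auto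
      then obtain z where "z \<in> Q" "w = h z" by blast
      then show "w \<in> h ` (a - b)" using w unfolding a_def b_def by blast
    qed
  qed
  have "bij_betw h (a - b) (incomp_sub (insert x (h ` Q)) le x)"
    unfolding bij_betw_def using inj_on_subset[OF inj abQ] img by blast
  moreover have "\<forall>u\<in>a - b. \<forall>v\<in>a - b. r u v \<longleftrightarrow> le (h u) (h v)" using rel abQ by blast
  ultimately have iso2: "order_iso (filters (a - b) r) filt_le (filters (incomp_sub (insert x (h ` Q)) le x) le) filt_le"
    by (rule filters_iso)
  show ?thesis using cut order_iso_trans[OF iso1 iso2] by blast
qed

definition decx :: "'a list \<Rightarrow> 'a + nat \<Rightarrow> 'a" where
  "decx xs z = (case z of Inl p \<Rightarrow> p | Inr j \<Rightarrow> xs ! (j - 1))"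

definition QQ :: "'a set \<Rightarrow> nat \<Rightarrow> ('a + nat) set" where
  "QQ P0 i = Inl ` P0 \<union> (\<lambda>k. Inr (Suc k)) ` {..<i}"

definition aa :: "'a set \<Rightarrow> ('a \<Rightarrow> 'a \<Rightarrow> bool) \<Rightarrow> 'a list \<Rightarrow> nat \<Rightarrow> ('a + nat) set" where
  "aa P0 le xs i = {z \<in> QQ P0 i. \<not> le (decx xs z) (xs ! i)}"

definition bb :: "'a set \<Rightarrow> ('a \<Rightarrow> 'a \<Rightarrow> bool) \<Rightarrow> 'a list \<Rightarrow> nat \<Rightarrow> ('a + nat) set" where
  "bb P0 le xs i = {z \<in> QQ P0 i. le (xs ! i) (decx xs z)}"

primrec RR :: "'a set \<Rightarrow> ('a \<Rightarrow> 'a \<Rightarrow> bool) \<Rightarrow> 'a list \<Rightarrow> nat \<Rightarrow> ('a + nat) \<Rightarrow> ('a + nat) \<Rightarrow> bool" where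
  "RR P0 le xs 0 = (\<lambda>u v. le (decx xs u) (decx xs v))"
| "RR P0 le xs (Suc i) = conv_exp_rel (QQ P0 i) (RR P0 le xs i) (aa P0 le xs i) (bb P0 le xs i) (Inr (Suc i))"


theorem corollary1:
  fixes P P0 :: "'a set" and le :: "'a \<Rightarrow> 'a \<Rightarrow> bool" and xs :: "'a list"
  assumes "finite P" and "poset_on P le"
    and "P = P0 \<union> set xs" and "P0 \<inter> set xs = {}" and "distinct xs"
  shows "\<exists>(Q :: nat \<Rightarrow> ('a + nat) set) (R :: nat \<Rightarrow> ('a + nat) \<Rightarrow> ('a + nat) \<Rightarrow> bool)
            (a :: nat \<Rightarrow> ('a + nat) set) (b :: nat \<Rightarrow> ('a + nat) set).
     Q 0 = Inl ` P0 \<and> (\<forall>p\<in>P0. \<forall>q\<in>P0. R 0 (Inl p) (Inl q) \<longleftrightarrow> le p q) \<and>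
     (\<forall>i\<in>{1..length xs}.
        cutting (filters (Q (i - 1)) (R (i - 1))) filt_le (a i) (b i) \<and>
        order_iso (interval (filters (Q (i - 1)) (R (i - 1))) filt_le (a i) (b i)) filt_le
          (filters (incomp_sub (P0 \<union> set (take i xs)) le (xs ! (i - 1))) le) filt_le \<and>
        Inr i \<notin> Q (i - 1) \<and>
        Q i = insert (Inr i) (Q (i - 1)) \<and>
        R i = conv_exp_rel (Q (i - 1)) (R (i - 1)) (a i) (b i) (Inr i)) \<and>
     order_iso (filters (Q (length xs)) (R (length xs))) filt_le (filters P le) filt_le"

proof -
  define n where "n = length xs"
  define h where "h = decx xs"
  define Q where "Q = QQ P0"
  define R where "R = RR P0 le xs"
  have P0P: "P0 \<subseteq> P" using assms(3) by blast
  have Qimg: "h ` Q i = P0 \<union> set (take i xs)" if "i \<le> n" for i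
  proof -
    have "h ` Q i = P0 \<union> (!) xs ` {0..<i}"
      unfolding h_def Q_def QQ_def by (auto simp: image_Un image_image decx_def atLeast0LessThan)
    then show ?thesis using nth_image[of i xs] that n_def by simp
  qed
  have Qinj: "inj_on h (Q i)" if "i \<le> n" for i
  proof (rule inj_onI)
    fix u v assume u: "u \<in> Q i" and v: "v \<in> Q i" and huv: "h u = h v"
    show "u = v"
    proof (cases u)
      case (Inl p)
      then have p: "p \<in> P0" using u unfolding Q_def QQ_def by auto
      show ?thesis
      proof (cases v)
        case (Inl q) then show ?thesis using huv \<open>u = Inl p\<close> by (simp add: h_def decx_def)
      next
        case (Inr j)
        then obtain k where k: "j = Suc k" "k < i" using v unfolding Q_def QQ_def by auto
        then have "p = xs ! k" using huv Inr \<open>u = Inl p\<close> by (simp add: h_def decx_def)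
        moreover have "xs ! k \<in> set xs" using k that n_def by simp
        ultimately show ?thesis using p assms(4) by blast
      qed
    next
      case (Inr j)
      then obtain k where k: "j = Suc k" "k < i" using u unfolding Q_def QQ_def by auto
      show ?thesis
      proof (cases v)
        case (Inl q)
        then have q: "q \<in> P0" using v unfolding Q_def QQ_def by auto
        have "q = xs ! k" using huv Inr Inl k by (simp add: h_def decx_def)
        moreover have "xs ! k \<in> set xs" using k that n_def by simp
        ultimately show ?thesis using q assms(4) by blast
      next
        case (Inr j')
        then obtain k' where k': "j' = Suc k'" "k' < i" using v unfolding Q_def QQ_def by auto
        have "xs ! k = xs ! k'" using huv Inr \<open>u = Inr j\<close> k k' by (simp add: h_def decx_def)
        then have "k = k'" using nth_eq_iff_index_eq[OF assms(5)] k k' that n_def by simp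
        then show ?thesis using Inr \<open>u = Inr j\<close> k k' by simp
      qed
    qed
  qed
  have Qfin: "finite (Q i)" for i
    using finite_subset[OF P0P assms(1)] unfolding Q_def QQ_def by auto
  have Qsuc: "Q (Suc i) = insert (Inr (Suc i)) (Q i)" for i
    unfolding Q_def QQ_def by (auto simp: lessThan_Suc)
  have Qnot: "Inr (Suc i) \<notin> Q i" for i
    unfolding Q_def QQ_def by auto
  have hnew: "h (Inr (Suc i)) = xs ! i" for i
    unfolding h_def decx_def by simp
  have hP: "h ` Q i \<subseteq> P" if "i \<le> n" for i
    using Qimg[OF that] assms(3) set_take_subset[of i xs] by blast
  have xP: "xs ! i \<in> P" if "i < n" for i
    using that n_def assms(3) by auto
  have xnot: "xs ! i \<notin> h ` Q i" if "i < n" for i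
  proof
    assume "xs ! i \<in> h ` Q i"
    then have "xs ! i \<in> P0 \<union> set (take i xs)" using Qimg that by simp
    moreover have "xs ! i \<notin> P0" using assms(4) that n_def by auto
    moreover have "xs ! i \<notin> set (take i xs)"
    proof
      assume "xs ! i \<in> set (take i xs)"
      then have "xs ! i \<in> (!) xs ` {0..<i}" using nth_image[of i xs] that n_def by simp
      then obtain k where "k < i" "xs ! i = xs ! k" by auto
      then show False using nth_eq_iff_index_eq[OF assms(5)] that n_def by simp
    qed
    ultimately show False by blast
  qed
  have aeq: "aa P0 le xs i = {z\<in>Q i. \<not> le (h z) (xs ! i)}" for i
    unfolding aa_def Q_def h_def by simp
  have beq: "bb P0 le xs i = {z\<in>Q i. le (xs ! i) (h z)}" for i
    unfolding bb_def Q_def h_def by simp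
  have Rinv: "\<forall>u\<in>Q i. \<forall>v\<in>Q i. R i u v \<longleftrightarrow> le (h u) (h v)" if "i \<le> n" for i
    using that
  proof (induction i)
    case 0 then show ?case unfolding R_def h_def by simp
  next
    case (Suc i)
    then have i: "i < n" "i \<le> n" by auto
    have "\<forall>u\<in>insert (Inr (Suc i)) (Q i). \<forall>v\<in>insert (Inr (Suc i)) (Q i).
        conv_exp_rel (Q i) (R i) (aa P0 le xs i) (bb P0 le xs i) (Inr (Suc i)) u v \<longleftrightarrow> le (h u) (h v)"
      by (rule conv_exp_correct[OF Qfin assms(2) hP[OF i(2)] Qinj[OF i(2)] xP[OF i(1)] Qnot hnew
            Suc.IH[OF i(2)] aeq beq])
    then show ?case unfolding Qsuc by (simp add: R_def Q_def)
  qed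
  show ?thesis
  proof (intro exI conjI ballI)
    show "Q 0 = Inl ` P0" unfolding Q_def QQ_def by simp
  next
    fix p q assume "p \<in> P0" "q \<in> P0"
    show "R 0 (Inl p) (Inl q) \<longleftrightarrow> le p q" unfolding R_def by (simp add: decx_def)
  next
    fix i assume "i \<in> {1..length xs}"
    then obtain j where j: "i = Suc j" "j < n" unfolding n_def by (cases i) auto
    have st: "cutting (filters (Q j) (R j)) filt_le (aa P0 le xs j) (bb P0 le xs j) \<and>
      order_iso (interval (filters (Q j) (R j)) filt_le (aa P0 le xs j) (bb P0 le xs j)) filt_le
        (filters (incomp_sub (insert (xs ! j) (h ` Q j)) le (xs ! j)) le) filt_le"
      using j by (intro step_lemma[OF Qfin assms(2) hP Qinj xP xnot Rinv aeq beq]) auto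
    have ins: "insert (xs ! j) (h ` Q j) = P0 \<union> set (take (Suc j) xs)"
      using Qimg[of j] j n_def by (auto simp: take_Suc_conv_app_nth)
    show "cutting (filters (Q (i - 1)) (R (i - 1))) filt_le (aa P0 le xs (i - 1)) (bb P0 le xs (i - 1))"
      using st j by simp
    show "order_iso (interval (filters (Q (i - 1)) (R (i - 1))) filt_le (aa P0 le xs (i - 1)) (bb P0 le xs (i - 1))) filt_le
          (filters (incomp_sub (P0 \<union> set (take i xs)) le (xs ! (i - 1))) le) filt_le"
      using st j ins by simp
    show "Inr i \<notin> Q (i - 1)" using Qnot j by simp
    show "Q i = insert (Inr i) (Q (i - 1))" using Qsuc j by simp
    show "R i = conv_exp_rel (Q (i - 1)) (R (i - 1)) (aa P0 le xs (i - 1)) (bb P0 le xs (i - 1)) (Inr i)"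
      using j unfolding R_def Q_def by simp
  next
    have bj: "bij_betw h (Q n) P" unfolding bij_betw_def using Qinj Qimg assms(3) n_def by simp
    show "order_iso (filters (Q (length xs)) (R (length xs))) filt_le (filters P le) filt_le"
      using filters_iso[OF bj Rinv[of n]] n_def by simp
  qed
qed

end
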